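(* Let $k\ge 2$ and $1\le r\le k-1$. For all sufficiently large $n$ (as a function of $k$), for $T\sim\mathcal{R}(n,k)$ the probability that there exist a permutation $\pi$ of $V(T)$ and subsets $S_i\subseteq A_i$ with $|S_i|\ge n/18$ for $i=1,\ldots,r$ such that the event $Y(T,\pi,S_1,\ldots,S_r)$ occurs, is at most $\frac{1}{kn}$.
   Context: $\mathcal{R}(n,k)$ is the probability space of $k$-partite tournaments with vertex classes $A_1,\ldots,A_k$ of size $n$ each, every edge between distinct classes oriented independently and uniformly at random. For a permutation (bijection) $\pi:V(T)\to\{1,\ldots,kn\}$, $L_\pi(T)$ is the spanning subgraph of $T$ consisting of all edges $(u,v)\in E(T)$ with $\pi(u)<\pi(v)$, viewed as undirected. For $1\le r<k$, an $r$-clique $\{v_1,\ldots,v_r\}$ of $L_\pi(T)$ with $v_i\in A_i$ is friendly if for every $r<t\le k$ and every $1\le r'\le r$, the number of vertices of $A_t$ that are common neighbors of $v_1,\ldots,v_{r'}$ in $L_\pi(T)$ is at least $n/2^{r'+1}$. For $S_i\subseteq A_i$ ($i=1,\ldots,r$), $Y(T,\pi,S_1,\ldots,S_r)$ is the event that there are fewer than $0.5(1/18)^r n^r 2^{-\binom{r}{2}}$ friendly $r$-cliques $\{v_1,\ldots,v_r\}$ in $L_\pi(T)$ with $v_i\in S_i$ for all $i$. *)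

theory Defs
  imports "HOL-Probability.Probability"
begin

text \<open>Vertices of a k-partite tournament with classes A_1..A_k of size n:
  vertex (i,j) with 1 <= i <= k, j < n lies in class A_i.\<close>

definition vclass :: "nat \<Rightarrow> nat \<Rightarrow> (nat \<times> nat) set" where
  "vclass n i = {(i, j) | j. j < n}"

definition verts :: "nat \<Rightarrow> nat \<Rightarrow> (nat \<times> nat) set" where
  "verts k n = (\<Union>i\<in>{1..k}. vclass n i)"

text \<open>The uniform distribution on this finite set is exactly R(n,k).\<close>

definition tournaments :: "nat \<Rightarrow> nat \<Rightarrow> (nat \<times> nat) rel set" where
  "tournaments k n = {E. E \<subseteq> {(u, v). u \<in> verts k n \<and> v \<in> verts k n \<and> fst u \<noteq> fst v} \<and>
      (\<forall>u\<in>verts k n. \<forall>v\<in>verts k n. fst u \<noteq> fst v \<longrightarrow> ((u, v) \<in> E \<longleftrightarrow> (v, u) \<notin> E))}"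

definition Ladj :: "(nat \<times> nat) rel \<Rightarrow> (nat \<times> nat \<Rightarrow> nat) \<Rightarrow> nat \<times> nat \<Rightarrow> nat \<times> nat \<Rightarrow> bool" where
  "Ladj T \<pi> u v \<longleftrightarrow> ((u, v) \<in> T \<and> \<pi> u < \<pi> v) \<or> ((v, u) \<in> T \<and> \<pi> v < \<pi> u)"

text \<open>An r-clique {v_1,..,v_r} with v_i in A_i is represented by the function i |-> v_i
  on {1..r} (this is a bijective correspondence since the classes are disjoint).\<close>

definition is_clique :: "(nat \<times> nat) rel \<Rightarrow> (nat \<times> nat \<Rightarrow> nat) \<Rightarrow> nat \<Rightarrow> (nat \<Rightarrow> nat \<times> nat) \<Rightarrow> bool" where
  "is_clique T \<pi> r v \<longleftrightarrow> (\<forall>i\<in>{1..r}. \<forall>j\<in>{1..r}. i \<noteq> j \<longrightarrow> Ladj T \<pi> (v i) (v j))"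

definition friendly :: "nat \<Rightarrow> nat \<Rightarrow> (nat \<times> nat) rel \<Rightarrow> (nat \<times> nat \<Rightarrow> nat) \<Rightarrow> nat \<Rightarrow> (nat \<Rightarrow> nat \<times> nat) \<Rightarrow> bool" where
  "friendly k n T \<pi> r v \<longleftrightarrow> is_clique T \<pi> r v \<and>
     (\<forall>i\<in>{1..r}. v i \<in> vclass n i) \<and>
     (\<forall>t\<in>{r<..k}. \<forall>r'\<in>{1..r}.
        real (card {w \<in> vclass n t. \<forall>i\<in>{1..r'}. Ladj T \<pi> (v i) w}) \<ge> real n / 2 ^ (r' + 1))"

definition Y_event :: "nat \<Rightarrow> nat \<Rightarrow> (nat \<times> nat) rel \<Rightarrow> (nat \<times> nat \<Rightarrow> nat) \<Rightarrow> nat \<Rightarrow> (nat \<Rightarrow> (nat \<times> nat) set) \<Rightarrow> bool" where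
  "Y_event k n T \<pi> r S \<longleftrightarrow>
     real (card {v \<in> Pi\<^sub>E {1..r} S. friendly k n T \<pi> r v})
       < 0.5 * (1 / 18) ^ r * real n ^ r / 2 ^ (r choose 2)"

definition bad_event :: "nat \<Rightarrow> nat \<Rightarrow> nat \<Rightarrow> (nat \<times> nat) rel set" where
  "bad_event k n r = {T. \<exists>\<pi>. bij_betw \<pi> (verts k n) {1..k * n} \<and>
      (\<exists>S. (\<forall>i\<in>{1..r}. S i \<subseteq> vclass n i \<and> real (card (S i)) \<ge> real n / 18) \<and>
           Y_event k n T \<pi> r S)}"

end

theory Submission
  imports Defs "HOL-Real_Asymp.Real_Asymp"
begin


definition NB :: "(nat \<times> nat) rel \<Rightarrow> (nat \<times> nat \<Rightarrow> nat) \<Rightarrow> (nat \<Rightarrow> nat \<times> nat) \<Rightarrow> nat \<Rightarrow> (nat \<times> nat) set" where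
  "NB T \<pi> v j = {w. \<forall>i\<in>{1..j}. Ladj T \<pi> (v i) w}"

definition UU :: "nat \<Rightarrow> nat \<Rightarrow> (nat \<Rightarrow> (nat \<times> nat) set) \<Rightarrow> nat \<Rightarrow> (nat \<times> nat) set" where
  "UU n r S t = (if t \<le> r then S t else vclass n t)"

definition Disc :: "nat \<Rightarrow> nat \<Rightarrow> (nat \<times> nat) rel \<Rightarrow> (nat \<times> nat \<Rightarrow> nat) \<Rightarrow> real \<Rightarrow> bool" where
  "Disc k n T \<pi> \<epsilon> \<longleftrightarrow> (\<forall>i j X Y. 1 \<le> i \<longrightarrow> i < j \<longrightarrow> j \<le> k \<longrightarrow> X \<subseteq> vclass n i \<longrightarrow> Y \<subseteq> vclass n j \<longrightarrow>
      real (card {p \<in> X \<times> Y. Ladj T \<pi> (fst p) (snd p)}) > real (card X) * real (card Y) / 2 - \<epsilon> * real n ^ 2)"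

lemma Ladj_sym: "Ladj T \<pi> u v = Ladj T \<pi> v u"
  unfolding Ladj_def by auto

lemma vclass_eq: "vclass n i = Pair i ` {..<n}"
  unfolding vclass_def by auto

lemma finite_vclass[simp]: "finite (vclass n i)"
  by (simp add: vclass_eq)

lemma card_vclass[simp]: "card (vclass n i) = n"
  by (simp add: vclass_eq card_image inj_on_def)

lemma card_pairs_sum:
  assumes "finite X" "finite Y"
  shows "card {p \<in> X \<times> Y. G (fst p) (snd p)} = (\<Sum>w\<in>X. card {y\<in>Y. G w y})"
proof -
  have "{p \<in> X \<times> Y. G (fst p) (snd p)} = (SIGMA w:X. {y\<in>Y. G w y})" by auto
  thus ?thesis using assms by (simp add: card_SigmaI)
qed

context
  fixes k n r :: nat and T :: "(nat \<times> nat) rel" and \<pi> :: "nat \<times> nat \<Rightarrow> nat"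
    and S :: "nat \<Rightarrow> (nat \<times> nat) set" and \<alpha> \<epsilon> \<delta> :: real
  assumes r1: "1 \<le> r" and rk: "r < k" and npos: "n > 0"
    and S: "\<And>i. i \<in> {1..r} \<Longrightarrow> S i \<subseteq> vclass n i \<and> real (card (S i)) \<ge> real n / 18"
    and disc: "Disc k n T \<pi> \<epsilon>"
    and \<delta>_def: "\<delta> = 1 / (8 * real r ^ 2)"
    and \<alpha>_def: "\<alpha> = 1/2 - \<delta>"
    and \<epsilon>_def: "\<epsilon> = \<delta> / (8 * real r * 324 * real k * 4 ^ r)"
begin

abbreviation "U \<equiv> UU n r S"
abbreviation "N \<equiv> NB T \<pi>"

definition Pj :: "nat \<Rightarrow> (nat \<Rightarrow> nat \<times> nat) set" where
  "Pj j = {v \<in> PiE {1..j} S. is_clique T \<pi> j v \<and>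
     (\<forall>r'\<in>{1..j}. \<forall>t\<in>{r'<..k}. real (card (N v r' \<inter> U t)) \<ge> \<alpha> ^ r' * real (card (U t)))}"

lemma \<delta>_pos: "\<delta> > 0" using r1 by (simp add: \<delta>_def)
lemma \<delta>_small: "\<delta> \<le> 1/8"
proof -
  have "real r ^ 2 \<ge> 1" using r1 by simp
  hence "1 / (8 * real r ^ 2) \<le> 1 / 8" by (intro divide_left_mono) (use r1 in auto)
  thus ?thesis unfolding \<delta>_def .
qed
lemma \<alpha>_pos: "\<alpha> > 0" using \<delta>_small by (simp add: \<alpha>_def)
lemma \<epsilon>_pos: "\<epsilon> > 0" using \<delta>_pos r1 rk by (simp add: \<epsilon>_def)

lemma U_sub: "t \<in> {1..k} \<Longrightarrow> U t \<subseteq> vclass n t"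
proof (cases "t \<le> r")
  case True
  assume "t \<in> {1..k}"
  with True have "t \<in> {1..r}" by simp
  from S[OF this] True show ?thesis by (simp add: UU_def)
qed (simp add: UU_def)
lemma U_fin: "t \<in> {1..k} \<Longrightarrow> finite (U t)"
  by (rule finite_subset[OF U_sub finite_vclass])
lemma U_card: "t \<in> {1..k} \<Longrightarrow> real (card (U t)) \<ge> real n / 18"
proof (cases "t \<le> r")
  case True
  assume "t \<in> {1..k}"
  with True have "t \<in> {1..r}" by simp
  from S[OF this] True show ?thesis by (simp add: UU_def)
qed (simp add: UU_def)


lemma NB0: "N v 0 = UNIV" by (simp add: NB_def)

lemma Pj_M:
  assumes "v \<in> Pj j" "t \<in> {j<..k}"
  shows "real (card (N v j \<inter> U t)) \<ge> \<alpha> ^ j * real (card (U t))"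
proof (cases "j = 0")
  case True thus ?thesis by (simp add: NB0)
next
  case False
  hence "j \<in> {1..j}" by simp
  with assms show ?thesis unfolding Pj_def by blast
qed

lemma M_card:
  assumes "v \<in> Pj j" "t \<in> {j<..k}"
  shows "real (card (N v j \<inter> U t)) \<ge> \<alpha> ^ j * (real n / 18)"
proof -
  have t: "t \<in> {1..k}" using assms(2) by auto
  have "\<alpha> ^ j * (real n / 18) \<le> \<alpha> ^ j * real (card (U t))"
    using U_card[OF t] \<alpha>_pos by (intro mult_left_mono) auto
  also have "\<dots> \<le> real (card (N v j \<inter> U t))" by (rule Pj_M[OF assms])
  finally show ?thesis .
qed

definition Bset :: "(nat \<Rightarrow> nat \<times> nat) \<Rightarrow> nat \<Rightarrow> nat \<Rightarrow> (nat \<times> nat) set" where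
  "Bset v j t = {w \<in> N v j \<inter> U (Suc j).
      real (card (N v j \<inter> U t \<inter> {y. Ladj T \<pi> w y})) < \<alpha> * real (card (N v j \<inter> U t))}"

definition Wset :: "(nat \<Rightarrow> nat \<times> nat) \<Rightarrow> nat \<Rightarrow> (nat \<times> nat) set" where
  "Wset v j = {w \<in> N v j \<inter> U (Suc j). \<forall>t\<in>{Suc j<..k}.
      real (card (N v j \<inter> U t \<inter> {y. Ladj T \<pi> w y})) \<ge> \<alpha> * real (card (N v j \<inter> U t))}"

lemma B_bound:
  assumes v: "v \<in> Pj j" and j: "j < r" and t: "t \<in> {Suc j<..k}"
  shows "real (card (Bset v j t)) \<le> 18 * \<epsilon> * real n / (\<delta> * \<alpha> ^ j)"
proof -
  define M where "M = N v j \<inter> U t"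
  define B where "B = Bset v j t"
  have tk: "t \<in> {1..k}" using t by auto
  have jk: "Suc j \<in> {1..k}" using j rk by auto
  have Msub: "M \<subseteq> vclass n t" unfolding M_def using U_sub[OF tk] by auto
  have Bsub: "B \<subseteq> vclass n (Suc j)" unfolding B_def Bset_def using U_sub[OF jk] by auto
  have finM: "finite M" using Msub by (rule finite_subset) simp
  have finB: "finite B" using Bsub by (rule finite_subset) simp
  have "real (card {p \<in> B \<times> M. Ladj T \<pi> (fst p) (snd p)}) > real (card B) * real (card M) / 2 - \<epsilon> * real n ^ 2"
    using disc Msub Bsub t unfolding Disc_def by auto
  moreover have "real (card {p \<in> B \<times> M. Ladj T \<pi> (fst p) (snd p)}) \<le> real (card B) * (\<alpha> * real (card M))"
  proof -
    have "real (card {p \<in> B \<times> M. Ladj T \<pi> (fst p) (snd p)}) = (\<Sum>w\<in>B. real (card {y\<in>M. Ladj T \<pi> w y}))"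
      by (simp add: card_pairs_sum[OF finB finM])
    also have "\<dots> \<le> (\<Sum>w\<in>B. \<alpha> * real (card M))"
    proof (rule sum_mono)
      fix w assume "w \<in> B"
      hence "real (card (M \<inter> {y. Ladj T \<pi> w y})) < \<alpha> * real (card M)"
        unfolding B_def Bset_def M_def by auto
      moreover have "{y\<in>M. Ladj T \<pi> w y} = M \<inter> {y. Ladj T \<pi> w y}" by auto
      ultimately show "real (card {y\<in>M. Ladj T \<pi> w y}) \<le> \<alpha> * real (card M)" by simp
    qed
    also have "\<dots> = real (card B) * (\<alpha> * real (card M))" by simp
    finally show ?thesis .
  qed
  ultimately have key: "real (card B) * (\<delta> * real (card M)) < \<epsilon> * real n ^ 2"
    unfolding \<alpha>_def by (simp add: algebra_simps)
  have Mlow: "real (card M) \<ge> \<alpha> ^ j * (real n / 18)"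
    unfolding M_def using M_card[OF v] t by auto
  have mpos: "\<alpha> ^ j * (real n / 18) > 0" using \<alpha>_pos npos by simp
  have "real (card B) * (\<delta> * (\<alpha> ^ j * (real n / 18))) \<le> real (card B) * (\<delta> * real (card M))"
    using Mlow \<delta>_pos by (intro mult_left_mono) auto
  with key have "real (card B) * (\<delta> * (\<alpha> ^ j * (real n / 18))) \<le> \<epsilon> * real n ^ 2" by linarith
  hence "real (card B) \<le> \<epsilon> * real n ^ 2 / (\<delta> * (\<alpha> ^ j * (real n / 18)))"
    using mpos \<delta>_pos by (simp add: pos_le_divide_eq)
  also have "\<dots> = 18 * \<epsilon> * real n / (\<delta> * \<alpha> ^ j)"
    using npos \<alpha>_pos \<delta>_pos by (simp add: field_simps power2_eq_square)
  finally show ?thesis unfolding B_def .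
qed

lemma W_card:
  assumes v: "v \<in> Pj j" and j: "j < r"
  shows "real (card (Wset v j)) \<ge> \<alpha> ^ j * (real n / 18) - real k * (18 * \<epsilon> * real n / (\<delta> * \<alpha> ^ j))"
proof -
  define A where "A = N v j \<inter> U (Suc j)"
  define C where "C = (\<Union>t\<in>{Suc j<..k}. Bset v j t)"
  have jk: "Suc j \<in> {1..k}" using j rk by auto
  have finA: "finite A" unfolding A_def using U_fin[OF jk] by auto
  have W: "Wset v j = A - C"
    unfolding A_def C_def Wset_def Bset_def by (auto simp: not_less)
  have finB: "finite (Bset v j t)" for t
    using finA unfolding A_def Bset_def by (rule finite_subset[rotated]) auto
  have "card A \<le> card ((A - C) \<union> C)"
    by (rule card_mono) (use finA finB C_def in auto)
  also have "\<dots> \<le> card (A - C) + card C" by (rule card_Un_le)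
  finally have 1: "real (card A) \<le> real (card (A - C)) + real (card C)" by linarith
  have "card C \<le> (\<Sum>t\<in>{Suc j<..k}. card (Bset v j t))"
    unfolding C_def by (rule card_UN_le) simp
  hence "real (card C) \<le> (\<Sum>t\<in>{Suc j<..k}. real (card (Bset v j t)))"
    by (metis of_nat_le_iff of_nat_sum)
  also have "\<dots> \<le> (\<Sum>t\<in>{Suc j<..k}. 18 * \<epsilon> * real n / (\<delta> * \<alpha> ^ j))"
    by (rule sum_mono) (rule B_bound[OF v j], simp)
  also have "\<dots> = real (k - Suc j) * (18 * \<epsilon> * real n / (\<delta> * \<alpha> ^ j))" by simp
  also have "\<dots> \<le> real k * (18 * \<epsilon> * real n / (\<delta> * \<alpha> ^ j))"
    using \<epsilon>_pos \<delta>_pos \<alpha>_pos by (intro mult_right_mono) auto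
  finally have 2: "real (card C) \<le> real k * (18 * \<epsilon> * real n / (\<delta> * \<alpha> ^ j))" .
  have 3: "real (card A) \<ge> \<alpha> ^ j * (real n / 18)"
    unfolding A_def using M_card[OF v, of "Suc j"] j rk by auto
  show ?thesis unfolding W using 1 2 3 by linarith
qed


lemma S_fin: "i \<in> {1..r} \<Longrightarrow> finite (S i)"
proof -
  assume "i \<in> {1..r}"
  hence "S i \<subseteq> vclass n i" using S by simp
  thus ?thesis by (rule finite_subset) simp
qed

lemma Pj_fin: "j \<le> r \<Longrightarrow> finite (Pj j)"
proof -
  assume "j \<le> r"
  hence "finite (PiE {1..j} S)" using S_fin by (intro finite_PiE) auto
  thus ?thesis unfolding Pj_def by (rule finite_subset[rotated]) auto
qed

lemma NB_upd_le: "r' \<le> j \<Longrightarrow> N (v(Suc j := w)) r' = N v r'"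
  unfolding NB_def by auto

lemma NB_upd_Suc: "N (v(Suc j := w)) (Suc j) = N v j \<inter> {y. Ladj T \<pi> w y}"
  unfolding NB_def
proof (intro set_eqI iffI)
  fix y assume "y \<in> {y. \<forall>i\<in>{1..Suc j}. Ladj T \<pi> ((v(Suc j := w)) i) y}"
  hence h: "\<forall>i\<in>{1..Suc j}. Ladj T \<pi> ((v(Suc j := w)) i) y" by simp
  from h[rule_format, of "Suc j"] have "Ladj T \<pi> w y" by simp
  moreover have "\<forall>i\<in>{1..j}. Ladj T \<pi> (v i) y"
  proof
    fix i assume "i \<in> {1..j}"
    with h[rule_format, of i] show "Ladj T \<pi> (v i) y" by simp
  qed
  ultimately show "y \<in> {y. \<forall>i\<in>{1..j}. Ladj T \<pi> (v i) y} \<inter> {y. Ladj T \<pi> w y}" by simp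
next
  fix y assume "y \<in> {y. \<forall>i\<in>{1..j}. Ladj T \<pi> (v i) y} \<inter> {y. Ladj T \<pi> w y}"
  thus "y \<in> {y. \<forall>i\<in>{1..Suc j}. Ladj T \<pi> ((v(Suc j := w)) i) y}" by (auto simp: le_Suc_eq)
qed

lemma ext_mem:
  assumes v: "v \<in> Pj j" and j: "j < r" and w: "w \<in> Wset v j"
  shows "v(Suc j := w) \<in> Pj (Suc j)"
proof -
  have vP: "v \<in> PiE {1..j} S" and vc: "is_clique T \<pi> j v"
    and vcond: "\<forall>r'\<in>{1..j}. \<forall>t\<in>{r'<..k}. real (card (N v r' \<inter> U t)) \<ge> \<alpha> ^ r' * real (card (U t))"
    using v unfolding Pj_def by auto
  have wN: "w \<in> N v j" and wU: "w \<in> U (Suc j)"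
    and wc: "\<forall>t\<in>{Suc j<..k}. real (card (N v j \<inter> U t \<inter> {y. Ladj T \<pi> w y})) \<ge> \<alpha> * real (card (N v j \<inter> U t))"
    using w unfolding Wset_def by auto
  have wS: "w \<in> S (Suc j)" using wU j by (simp add: UU_def)
  have P1: "v(Suc j := w) \<in> PiE {1..Suc j} S"
  proof (unfold PiE_iff, intro conjI ballI)
    fix i assume "i \<in> {1..Suc j}"
    thus "(v(Suc j := w)) i \<in> S i" using vP wS by (cases "i = Suc j") (auto simp: PiE_iff)
  next
    show "v(Suc j := w) \<in> extensional {1..Suc j}"
      using vP by (auto simp: PiE_iff extensional_def)
  qed
  have P2: "is_clique T \<pi> (Suc j) (v(Suc j := w))"
    unfolding is_clique_def
  proof (intro ballI impI)
    fix a b assume a: "a \<in> {1..Suc j}" and b: "b \<in> {1..Suc j}" and ab: "a \<noteq> b"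
    show "Ladj T \<pi> ((v(Suc j := w)) a) ((v(Suc j := w)) b)"
    proof (cases "a = Suc j")
      case True
      hence "b \<in> {1..j}" using b ab by auto
      hence "Ladj T \<pi> (v b) w" using wN unfolding NB_def by auto
      thus ?thesis using True ab by (simp add: Ladj_sym)
    next
      case False
      hence a': "a \<in> {1..j}" using a by auto
      show ?thesis
      proof (cases "b = Suc j")
        case True
        thus ?thesis using a' wN False unfolding NB_def by auto
      next
        case False
        hence "b \<in> {1..j}" using b by auto
        thus ?thesis using a' vc ab \<open>a \<noteq> Suc j\<close> False unfolding is_clique_def by auto
      qed
    qed
  qed
  have P3: "\<forall>r'\<in>{1..Suc j}. \<forall>t\<in>{r'<..k}. real (card (N (v(Suc j := w)) r' \<inter> U t)) \<ge> \<alpha> ^ r' * real (card (U t))"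
  proof (intro ballI)
    fix r' t assume r': "r' \<in> {1..Suc j}" and t: "t \<in> {r'<..k}"
    show "real (card (N (v(Suc j := w)) r' \<inter> U t)) \<ge> \<alpha> ^ r' * real (card (U t))"
    proof (cases "r' = Suc j")
      case True
      have tt: "t \<in> {Suc j<..k}" using t True by auto
      have "\<alpha> ^ r' * real (card (U t)) = \<alpha> * (\<alpha> ^ j * real (card (U t)))" using True by simp
      also have "\<dots> \<le> \<alpha> * real (card (N v j \<inter> U t))"
        using Pj_M[OF v, of t] tt \<alpha>_pos by (intro mult_left_mono) auto
      also have "\<dots> \<le> real (card (N v j \<inter> U t \<inter> {y. Ladj T \<pi> w y}))" using wc tt by auto
      also have "N v j \<inter> U t \<inter> {y. Ladj T \<pi> w y} = N (v(Suc j := w)) r' \<inter> U t"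
        using True NB_upd_Suc by auto
      finally show ?thesis .
    next
      case False
      hence "r' \<in> {1..j}" using r' by auto
      thus ?thesis using vcond t NB_upd_le[of r' j v w] by auto
    qed
  qed
  show ?thesis unfolding Pj_def using P1 P2 P3 by blast
qed

lemma count_step:
  assumes j: "j < r"
  shows "real (card (Pj (Suc j))) \<ge> real (card (Pj j)) * (\<alpha> ^ j * (real n / 18) - real k * (18 * \<epsilon> * real n / (\<delta> * \<alpha> ^ j)))"
proof -
  define m where "m = \<alpha> ^ j * (real n / 18) - real k * (18 * \<epsilon> * real n / (\<delta> * \<alpha> ^ j))"
  define f :: "(nat \<Rightarrow> nat \<times> nat) \<times> (nat \<times> nat) \<Rightarrow> (nat \<Rightarrow> nat \<times> nat)"
    where "f = (\<lambda>(v, w). v(Suc j := w))"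
  have jk: "Suc j \<in> {1..k}" using j rk by auto
  have finW: "finite (Wset v j)" for v
    using U_fin[OF jk] unfolding Wset_def by (rule finite_subset[rotated]) auto
  have finP: "finite (Pj j)" using j by (intro Pj_fin) simp
  have sub: "f ` (SIGMA v:Pj j. Wset v j) \<subseteq> Pj (Suc j)"
    using ext_mem j unfolding f_def by auto
  have inj: "inj_on f (SIGMA v:Pj j. Wset v j)"
  proof (rule inj_onI)
    fix x y assume x: "x \<in> (SIGMA v:Pj j. Wset v j)" and y: "y \<in> (SIGMA v:Pj j. Wset v j)" and e: "f x = f y"
    obtain v w where xv: "x = (v, w)" and v: "v \<in> Pj j" using x by auto
    obtain v' w' where yv: "y = (v', w')" and v': "v' \<in> Pj j" using y by auto
    have e': "v(Suc j := w) = v'(Suc j := w')" using e xv yv f_def by simp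
    have "w = w'" using fun_cong[OF e', of "Suc j"] by simp
    moreover have "v = v'"
    proof
      fix i show "v i = v' i"
      proof (cases "i = Suc j")
        case True
        have "v \<in> PiE {1..j} S" "v' \<in> PiE {1..j} S" using v v' unfolding Pj_def by auto
        thus ?thesis using True by (auto simp: PiE_iff extensional_def)
      next
        case False thus ?thesis using fun_cong[OF e', of i] by simp
      qed
    qed
    ultimately show "x = y" using xv yv by simp
  qed
  have a: "card (SIGMA v:Pj j. Wset v j) \<le> card (Pj (Suc j))"
    using card_inj_on_le[OF inj sub] Pj_fin j by simp
  have b: "card (SIGMA v:Pj j. Wset v j) = (\<Sum>v\<in>Pj j. card (Wset v j))"
    using finP finW by (simp add: card_SigmaI)
  have c: "(\<Sum>v\<in>Pj j. real (card (Wset v j))) \<ge> (\<Sum>v\<in>Pj j. m)"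
    by (rule sum_mono) (use W_card j in \<open>auto simp: m_def\<close>)
  have "real (card (Pj j)) * m = (\<Sum>v\<in>Pj j. m)" by simp
  also have "\<dots> \<le> (\<Sum>v\<in>Pj j. real (card (Wset v j)))" by (rule c)
  also have "\<dots> = real (\<Sum>v\<in>Pj j. card (Wset v j))" by (rule of_nat_sum[symmetric])
  also have "\<dots> = real (card (SIGMA v:Pj j. Wset v j))" by (simp only: b)
  also have "\<dots> \<le> real (card (Pj (Suc j)))" using a by (simp only: of_nat_le_iff)
  finally have "real (card (Pj j)) * m \<le> real (card (Pj (Suc j)))" .
  thus ?thesis unfolding m_def .
qed

lemma Pj0: "card (Pj 0) = 1"
proof -
  have "Pj 0 = {\<lambda>_. undefined}" unfolding Pj_def is_clique_def by auto
  thus ?thesis by simp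
qed


lemma \<alpha>_pow: "\<alpha> ^ i = (1 - 2 * \<delta>) ^ i / 2 ^ i"
proof -
  have e: "\<alpha> = (1 - 2 * \<delta>) / 2" unfolding \<alpha>_def by simp
  show ?thesis unfolding e by (rule power_divide)
qed

lemma q_pow: assumes "i \<le> r" shows "(1 - 2 * \<delta>) ^ i \<ge> 1 - 1 / (4 * real r)"
proof -
  have q0: "0 \<le> 1 - 2 * \<delta>" "1 - 2 * \<delta> \<le> 1" using \<delta>_small \<delta>_pos by auto
  have "1 + real r * (- 2 * \<delta>) \<le> (1 + (- 2 * \<delta>)) ^ r"
    by (rule Bernoulli_inequality) (use \<delta>_small in auto)
  moreover have "1 + real r * (- 2 * \<delta>) = 1 - 1 / (4 * real r)"
    unfolding \<delta>_def using r1 by (simp add: field_simps power2_eq_square)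
  moreover have "(1 - 2 * \<delta>) ^ r \<le> (1 - 2 * \<delta>) ^ i"
    by (rule power_decreasing) (use assms q0 in auto)
  ultimately show ?thesis by simp
qed

lemma q_half: assumes "i \<le> r" shows "(1 - 2 * \<delta>) ^ i \<ge> 1 / 2"
proof -
  have "1 / (4 * real r) \<le> 1 / 4" using r1 by (simp add: field_simps)
  thus ?thesis using q_pow[OF assms] by linarith
qed

definition mm :: "nat \<Rightarrow> real" where
  "mm i = \<alpha> ^ i * (real n / 18) - real k * (18 * \<epsilon> * real n / (\<delta> * \<alpha> ^ i))"

lemma m_low:
  assumes i: "i < r"
  shows "mm i \<ge> (1 - 1 / (2 * real r)) * (real n / (18 * 2 ^ i))"
proof -
  define Q where "Q = (1 - 2 * \<delta>) ^ i"
  define P :: real where "P = 2 ^ i"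
  have Qh: "Q \<ge> 1 / 2" unfolding Q_def using q_half i by simp
  have Qp: "Q \<ge> 1 - 1 / (4 * real r)" unfolding Q_def using q_pow i by simp
  have Ppos: "P > 0" unfolding P_def by simp
  have kpos: "real k > 0" using rk by simp
  have rpos: "real r > 0" using r1 by simp
  have h1: "real k * (18 * \<epsilon> * real n / (\<delta> * \<alpha> ^ i)) = real n * P / (144 * real r * 4 ^ r * Q)"
    unfolding \<epsilon>_def \<alpha>_pow Q_def[symmetric] P_def[symmetric]
    using kpos rpos \<delta>_pos Qh Ppos by (simp add: field_simps)
  have PP: "P * P \<le> 4 ^ r"
  proof -
    have "P * P = 4 ^ i" unfolding P_def by (simp add: power_mult_distrib[symmetric])
    also have "\<dots> \<le> 4 ^ r" using i by (intro power_increasing) auto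
    finally show ?thesis .
  qed
  have h2: "real n * P / (144 * real r * 4 ^ r * Q) = (real n / (72 * real r * P)) * ((P * P) / (2 * 4 ^ r * Q))"
    using kpos rpos Qh Ppos by (simp add: field_simps)
  have "(P * P) / (2 * 4 ^ r * Q) \<le> 1"
  proof -
    have "P * P \<le> 2 * 4 ^ r * Q"
    proof -
      have "(4::real) ^ r \<le> 2 * 4 ^ r * Q" using Qh by (simp add: algebra_simps)
      thus ?thesis using PP by linarith
    qed
    thus ?thesis using Qh by (simp add: divide_le_eq)
  qed
  hence h3: "real n * P / (144 * real r * 4 ^ r * Q) \<le> real n / (72 * real r * P)"
    unfolding h2 using rpos Ppos by (intro mult_left_le) auto
  define X where "X = real n / (18 * P)"
  have X0: "X \<ge> 0" unfolding X_def using Ppos by simp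
  have h4: "\<alpha> ^ i * (real n / 18) = Q * X"
    unfolding \<alpha>_pow Q_def[symmetric] P_def[symmetric] X_def by simp
  have h5: "real n / (72 * real r * P) = X / (4 * real r)"
    unfolding X_def using rpos Ppos by (simp add: field_simps)
  have "(1 - 1 / (4 * real r)) * X \<le> Q * X" using Qp X0 by (intro mult_right_mono) auto
  moreover have "(1 - 1 / (2 * real r)) * X = (1 - 1 / (4 * real r)) * X - X / (4 * real r)"
    using rpos by (simp add: field_simps)
  ultimately have "(1 - 1 / (2 * real r)) * X \<le> Q * X - X / (4 * real r)" by linarith
  moreover have e: "mm i = Q * X - real n * P / (144 * real r * 4 ^ r * Q)" unfolding mm_def h1 h4 by simp
  moreover have "(1 - 1 / (2 * real r)) * (real n / (18 * 2 ^ i)) = (1 - 1 / (2 * real r)) * X"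
    unfolding X_def P_def by simp
  ultimately show ?thesis using h3 h5 by linarith
qed

lemma mm_nonneg: "i < r \<Longrightarrow> mm i \<ge> 0"
proof -
  assume i: "i < r"
  have "1 / (2 * real r) \<le> 1" using r1 by (simp add: field_simps)
  hence "0 \<le> (1 - 1 / (2 * real r)) * (real n / (18 * 2 ^ i))" by simp
  thus ?thesis using m_low[OF i] by linarith
qed

lemma Pj_card: "j \<le> r \<Longrightarrow> real (card (Pj j)) \<ge> (\<Prod>i<j. mm i)"
proof (induction j)
  case 0 thus ?case using Pj0 by simp
next
  case (Suc j)
  hence j: "j < r" by simp
  have "(\<Prod>i<Suc j. mm i) = (\<Prod>i<j. mm i) * mm j" by simp
  also have "\<dots> \<le> real (card (Pj j)) * mm j"
    using Suc j mm_nonneg[OF j] by (intro mult_right_mono) auto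
  also have "\<dots> \<le> real (card (Pj (Suc j)))" using count_step[OF j] unfolding mm_def by simp
  finally show ?case .
qed

lemma sum_lessThan_choose2: "(\<Sum>i<m. i) = m choose 2"
  by (induction m) (auto simp: numeral_2_eq_2)

lemma final_bound: "real (card (Pj r)) \<ge> 0.5 * (1 / 18) ^ r * real n ^ r / 2 ^ (r choose 2)"
proof -
  define \<theta> where "\<theta> = 1 - 1 / (2 * real r)"
  have th0: "\<theta> \<ge> 0" unfolding \<theta>_def using r1 by (simp add: field_simps)
  have "1 + real r * (- 1 / (2 * real r)) \<le> (1 + (- 1 / (2 * real r))) ^ r"
    by (rule Bernoulli_inequality) (use r1 in \<open>simp add: field_simps\<close>)
  hence thr: "\<theta> ^ r \<ge> 1 / 2" unfolding \<theta>_def using r1 by simp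
  have "(\<Prod>i<r. \<theta> * (real n / (18 * 2 ^ i))) \<le> (\<Prod>i<r. mm i)"
    by (rule prod_mono) (use m_low th0 in \<open>auto simp: \<theta>_def\<close>)
  also have "\<dots> \<le> real (card (Pj r))" by (rule Pj_card) simp
  finally have A: "(\<Prod>i<r. \<theta> * (real n / (18 * 2 ^ i))) \<le> real (card (Pj r))" .
  have "(\<Prod>i<r. \<theta> * (real n / (18 * 2 ^ i))) = \<theta> ^ r * ((real n / 18) ^ r / (\<Prod>i<r. (2::real) ^ i))"
    by (simp add: prod.distrib prod_dividef power_mult_distrib power_divide)
  also have "(\<Prod>i<r. (2::real) ^ i) = 2 ^ (r choose 2)"
    by (simp add: power_sum[symmetric] sum_lessThan_choose2)
  finally have B: "(\<Prod>i<r. \<theta> * (real n / (18 * 2 ^ i))) = \<theta> ^ r * ((real n / 18) ^ r / 2 ^ (r choose 2))" .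
  have "0.5 * (1 / 18) ^ r * real n ^ r / 2 ^ (r choose 2) = (1/2) * ((real n / 18) ^ r / 2 ^ (r choose 2))"
    by (simp add: power_divide)
  also have "\<dots> \<le> \<theta> ^ r * ((real n / 18) ^ r / 2 ^ (r choose 2))"
    using thr by (intro mult_right_mono) auto
  finally show ?thesis using A B by simp
qed

lemma not_Y: "\<not> Y_event k n T \<pi> r S"
proof -
  define F where "F = {v \<in> PiE {1..r} S. friendly k n T \<pi> r v}"
  have finF: "finite F"
  proof -
    have "finite (PiE {1..r} S)" using S_fin by (intro finite_PiE) auto
    thus ?thesis unfolding F_def by (rule finite_subset[rotated]) auto
  qed
  have sub: "Pj r \<subseteq> F"
  proof
    fix v assume v: "v \<in> Pj r"
    have vP: "v \<in> PiE {1..r} S" and vc: "is_clique T \<pi> r v"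
      and vcond: "\<forall>r'\<in>{1..r}. \<forall>t\<in>{r'<..k}. real (card (N v r' \<inter> U t)) \<ge> \<alpha> ^ r' * real (card (U t))"
      using v unfolding Pj_def by auto
    have "\<forall>i\<in>{1..r}. v i \<in> vclass n i"
    proof
      fix i assume i: "i \<in> {1..r}"
      have "v i \<in> S i" using vP i by auto
      moreover have "S i \<subseteq> vclass n i" using S[OF i] by simp
      ultimately show "v i \<in> vclass n i" by blast
    qed
    moreover have "\<forall>t\<in>{r<..k}. \<forall>r'\<in>{1..r}.
        real (card {w \<in> vclass n t. \<forall>i\<in>{1..r'}. Ladj T \<pi> (v i) w}) \<ge> real n / 2 ^ (r' + 1)"
    proof (intro ballI)
      fix t r' assume t: "t \<in> {r<..k}" and r': "r' \<in> {1..r}"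
      have Ut: "U t = vclass n t" using t by (simp add: UU_def)
      have eq: "{w \<in> vclass n t. \<forall>i\<in>{1..r'}. Ladj T \<pi> (v i) w} = N v r' \<inter> U t"
        unfolding Ut NB_def by auto
      have "r' < t" using r' t by auto
      hence h: "\<alpha> ^ r' * real (card (U t)) \<le> real (card (N v r' \<inter> U t))" using vcond r' t by auto
      have "\<alpha> ^ r' * real n \<le> real (card (N v r' \<inter> U t))" using h unfolding Ut by simp
      moreover have "real n / 2 ^ (r' + 1) \<le> \<alpha> ^ r' * real n"
      proof -
        have "(1 - 2 * \<delta>) ^ r' \<ge> 1 / 2" using q_half r' by simp
        hence "1 / 2 ^ (r' + 1) \<le> \<alpha> ^ r'" unfolding \<alpha>_pow by (simp add: field_simps)
        thus ?thesis using mult_right_mono[of "1 / 2 ^ (r' + 1)" "\<alpha> ^ r'" "real n"] by simp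
      qed
      ultimately show "real (card {w \<in> vclass n t. \<forall>i\<in>{1..r'}. Ladj T \<pi> (v i) w}) \<ge> real n / 2 ^ (r' + 1)"
        unfolding eq by linarith
    qed
    ultimately show "v \<in> F" unfolding F_def friendly_def using vP vc by blast
  qed
  have "real (card (Pj r)) \<le> real (card F)" using card_mono[OF finF sub] by simp
  thus ?thesis using final_bound unfolding Y_event_def F_def by simp
qed

end


definition P0 :: "nat \<Rightarrow> nat \<Rightarrow> ((nat \<times> nat) \<times> (nat \<times> nat)) set" where
  "P0 k n = {(u, v). u \<in> verts k n \<and> v \<in> verts k n \<and> fst u < fst v}"

definition Fm :: "nat \<Rightarrow> nat \<Rightarrow> (nat \<times> nat) rel \<Rightarrow> (nat \<times> nat) rel" where
  "Fm k n D = D \<union> (\<lambda>(u, v). (v, u)) ` (P0 k n - D)"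

lemma verts_eq: "verts k n = {1..k} \<times> {..<n}"
  unfolding verts_def vclass_def by auto

lemma finite_verts[simp]: "finite (verts k n)" by (simp add: verts_eq)
lemma card_verts: "card (verts k n) = k * n" by (simp add: verts_eq card_cartesian_product)

lemma finite_P0: "finite (P0 k n)"
proof -
  have "P0 k n \<subseteq> verts k n \<times> verts k n" unfolding P0_def by auto
  thus ?thesis by (rule finite_subset) simp
qed

lemma Fm_inv: "D \<subseteq> P0 k n \<Longrightarrow> Fm k n D \<inter> P0 k n = D"
  unfolding Fm_def P0_def by auto

lemma Fm_mem: "(a, b) \<in> Fm k n D \<longleftrightarrow> (a, b) \<in> D \<or> ((b, a) \<in> P0 k n \<and> (b, a) \<notin> D)"
  unfolding Fm_def by force

lemma Fm_tour: assumes D: "D \<subseteq> P0 k n" shows "Fm k n D \<in> tournaments k n"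
proof -
  have DP: "fst a < fst b \<and> a \<in> verts k n \<and> b \<in> verts k n" if "(a, b) \<in> D" for a b
    using D that unfolding P0_def by auto
  have 1: "Fm k n D \<subseteq> {(u, v). u \<in> verts k n \<and> v \<in> verts k n \<and> fst u \<noteq> fst v}"
  proof
    fix x assume x: "x \<in> Fm k n D"
    obtain a b where ab: "x = (a, b)" by (cases x)
    show "x \<in> {(u, v). u \<in> verts k n \<and> v \<in> verts k n \<and> fst u \<noteq> fst v}"
      using x DP[of a b] unfolding ab Fm_mem by (auto simp: P0_def)
  qed
  have 2: "(u, v) \<in> Fm k n D \<longleftrightarrow> (v, u) \<notin> Fm k n D"
    if uv: "u \<in> verts k n" "v \<in> verts k n" "fst u \<noteq> fst v" for u v
  proof (cases "fst u < fst v")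
    case True
    have "(u, v) \<in> P0 k n" using True uv by (simp add: P0_def)
    moreover have "(v, u) \<notin> D" using DP[of v u] True by auto
    moreover have "(v, u) \<notin> P0 k n" using True by (simp add: P0_def)
    ultimately show ?thesis unfolding Fm_mem by auto
  next
    case False
    hence F: "fst v < fst u" using uv by auto
    have "(v, u) \<in> P0 k n" using F uv by (simp add: P0_def)
    moreover have "(u, v) \<notin> D" using DP[of u v] F by auto
    moreover have "(u, v) \<notin> P0 k n" using F by (simp add: P0_def)
    ultimately show ?thesis unfolding Fm_mem by auto
  qed
  show ?thesis unfolding tournaments_def using 1 2 by blast
qed

lemma tour_Fm: assumes "T \<in> tournaments k n" shows "Fm k n (T \<inter> P0 k n) = T"
proof -
  have T1: "T \<subseteq> {(u, v). u \<in> verts k n \<and> v \<in> verts k n \<and> fst u \<noteq> fst v}"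
    and T2: "\<And>u v. u \<in> verts k n \<Longrightarrow> v \<in> verts k n \<Longrightarrow> fst u \<noteq> fst v \<Longrightarrow> ((u, v) \<in> T \<longleftrightarrow> (v, u) \<notin> T)"
  proof -
    have "T \<subseteq> {(u, v). u \<in> verts k n \<and> v \<in> verts k n \<and> fst u \<noteq> fst v} \<and>
      (\<forall>u\<in>verts k n. \<forall>v\<in>verts k n. fst u \<noteq> fst v \<longrightarrow> ((u, v) \<in> T \<longleftrightarrow> (v, u) \<notin> T))"
      using assms unfolding tournaments_def by (rule CollectD)
    thus "T \<subseteq> {(u, v). u \<in> verts k n \<and> v \<in> verts k n \<and> fst u \<noteq> fst v}"
      "\<And>u v. u \<in> verts k n \<Longrightarrow> v \<in> verts k n \<Longrightarrow> fst u \<noteq> fst v \<Longrightarrow> ((u, v) \<in> T \<longleftrightarrow> (v, u) \<notin> T)"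
      by blast+
  qed
  show ?thesis
  proof (intro equalityI subsetI)
    fix x assume x: "x \<in> Fm k n (T \<inter> P0 k n)"
    obtain a b where ab: "x = (a, b)" by (cases x)
    have "(a, b) \<in> T \<inter> P0 k n \<or> ((b, a) \<in> P0 k n \<and> (b, a) \<notin> T \<inter> P0 k n)"
      using x unfolding ab Fm_mem .
    thus "x \<in> T"
    proof
      assume "(a, b) \<in> T \<inter> P0 k n" thus ?thesis using ab by simp
    next
      assume h: "(b, a) \<in> P0 k n \<and> (b, a) \<notin> T \<inter> P0 k n"
      hence v: "b \<in> verts k n" "a \<in> verts k n" "fst b \<noteq> fst a" and nT: "(b, a) \<notin> T"
        unfolding P0_def by auto
      from T2[OF v] nT show ?thesis using ab by simp
    qed
  next
    fix x assume x: "x \<in> T"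
    obtain a b where ab: "x = (a, b)" by (cases x)
    have a: "a \<in> verts k n" "b \<in> verts k n" "fst a \<noteq> fst b" using T1 x ab by auto
    show "x \<in> Fm k n (T \<inter> P0 k n)"
    proof (cases "fst a < fst b")
      case True
      hence "(a, b) \<in> T \<inter> P0 k n" using a x ab by (simp add: P0_def)
      thus ?thesis unfolding ab Fm_mem by simp
    next
      case False
      hence "fst b < fst a" using a by auto
      hence "(b, a) \<in> P0 k n" using a by (simp add: P0_def)
      moreover have "(b, a) \<notin> T" using T2[OF a] x ab by simp
      ultimately show ?thesis unfolding ab Fm_mem by simp
    qed
  qed
qed

lemma Fm_bij: "bij_betw (Fm k n) (Pow (P0 k n)) (tournaments k n)"
proof (rule bij_betw_byWitness[where f' = "\<lambda>T. T \<inter> P0 k n"])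
  show "\<forall>D\<in>Pow (P0 k n). Fm k n D \<inter> P0 k n = D" using Fm_inv by blast
  show "\<forall>T\<in>tournaments k n. Fm k n (T \<inter> P0 k n) = T" using tour_Fm by blast
  show "Fm k n ` Pow (P0 k n) \<subseteq> tournaments k n" using Fm_tour by blast
  show "(\<lambda>T. T \<inter> P0 k n) ` tournaments k n \<subseteq> Pow (P0 k n)" by blast
qed

lemma tour_pmf:
  "pmf_of_set (tournaments k n) =
     map_pmf (\<lambda>b. Fm k n {x \<in> P0 k n. b x}) (Pi_pmf (P0 k n) False (\<lambda>_. bernoulli_pmf (1/2)))"
proof -
  have "pmf_of_set (tournaments k n) = map_pmf (Fm k n) (pmf_of_set (Pow (P0 k n)))"
    by (rule map_pmf_of_set_bij_betw[symmetric]) (use Fm_bij finite_P0 in auto)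
  also have "pmf_of_set (Pow (P0 k n)) = map_pmf (\<lambda>b. {x \<in> P0 k n. b x}) (Pi_pmf (P0 k n) False (\<lambda>_. bernoulli_pmf (1/2)))"
    by (rule pmf_of_set_Pow_conv_bernoulli[symmetric]) (rule finite_P0)
  finally show ?thesis by (simp add: map_pmf_comp)
qed

lemma Ladj_Fm:
  assumes inj: "inj_on \<pi> (verts k n)" and xy: "(x, y) \<in> P0 k n"
  shows "Ladj (Fm k n {x \<in> P0 k n. b x}) \<pi> x y \<longleftrightarrow> (b (x, y) \<longleftrightarrow> \<pi> x < \<pi> y)"
proof -
  have v: "x \<in> verts k n" "y \<in> verts k n" "fst x < fst y" using xy unfolding P0_def by auto
  have ne: "\<pi> x \<noteq> \<pi> y" using inj v by (metis inj_on_contraD less_irrefl)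
  have 1: "(x, y) \<in> Fm k n {x \<in> P0 k n. b x} \<longleftrightarrow> b (x, y)"
    using xy v unfolding Fm_def P0_def by auto
  have 2: "(y, x) \<in> Fm k n {x \<in> P0 k n. b x} \<longleftrightarrow> \<not> b (x, y)"
    using xy v unfolding Fm_def P0_def by auto
  show ?thesis unfolding Ladj_def 1 2 using ne by auto
qed


lemma card_filter_sum:
  assumes "finite A"
  shows "real (card {p \<in> A. P p}) = (\<Sum>p\<in>A. if P p then 1 else 0)"
proof -
  have "real (card {p \<in> A. P p}) = (\<Sum>p\<in>{p \<in> A. P p}. 1)" by simp
  also have "\<dots> = (\<Sum>p\<in>A. if P p then 1 else 0)" by (rule sum.inter_filter[OF assms])
  finally show ?thesis .
qed

lemma event_bound:
  fixes \<epsilon> :: real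
  assumes inj: "inj_on \<pi> (verts k n)" and ij: "1 \<le> i" "i < j" "j \<le> k"
    and X: "X \<subseteq> vclass n i" and Y: "Y \<subseteq> vclass n j" and \<epsilon>: "\<epsilon> > 0" and n: "n > 0"
  shows "measure (measure_pmf (pmf_of_set (tournaments k n)))
           {T. real (card {p \<in> X \<times> Y. Ladj T \<pi> (fst p) (snd p)}) \<le> real (card X) * real (card Y) / 2 - \<epsilon> * real n ^ 2}
         \<le> exp (- 2 * \<epsilon> ^ 2 * real n ^ 2)"
proof -
  define Q where "Q = P0 k n"
  define M where "M = Pi_pmf Q False (\<lambda>_. bernoulli_pmf (1/2))"
  define c where "c = (\<lambda>p::(nat \<times> nat) \<times> (nat \<times> nat). \<pi> (fst p) < \<pi> (snd p))"
  define Z where "Z = (\<lambda>p (b::(nat \<times> nat) \<times> (nat \<times> nat) \<Rightarrow> bool). if b p = c p then 1 else (0::real))"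
  define NN where "NN = card X * card Y"
  have finQ: "finite Q" unfolding Q_def by (rule finite_P0)
  have vc: "x \<in> vclass n a \<Longrightarrow> fst x = a \<and> snd x < n" for x a unfolding vclass_def by auto
  have XYQ: "X \<times> Y \<subseteq> Q"
  proof (intro subsetI, elim SigmaE)
    fix p x y assume p: "p = (x, y)" and xy: "x \<in> X" "y \<in> Y"
    have fx: "fst x = i" "snd x < n" using vc[of x i] X xy by auto
    have fy: "fst y = j" "snd y < n" using vc[of y j] Y xy by auto
    have "x \<in> verts k n" "y \<in> verts k n"
      unfolding verts_eq using fx fy ij by (auto simp: mem_Times_iff)
    thus "p \<in> Q" unfolding Q_def P0_def p using fx fy ij by simp
  qed
  have finX: "finite X" using X by (rule finite_subset) simp
  have finY: "finite Y" using Y by (rule finite_subset) simp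
  have finXY: "finite (X \<times> Y)" using finX finY by simp
  have cardX: "card X \<le> n" using card_mono[OF _ X] by simp
  have cardY: "card Y \<le> n" using card_mono[OF _ Y] by simp
  have cnt: "real (card {p \<in> X \<times> Y. Ladj (Fm k n {x \<in> Q. b x}) \<pi> (fst p) (snd p)}) = (\<Sum>p\<in>X \<times> Y. Z p b)" for b
  proof -
    have "{p \<in> X \<times> Y. Ladj (Fm k n {x \<in> Q. b x}) \<pi> (fst p) (snd p)} = {p \<in> X \<times> Y. b p = c p}"
    proof (intro Collect_cong conj_cong refl)
      fix p assume "p \<in> X \<times> Y"
      hence pQ: "(fst p, snd p) \<in> P0 k n" using XYQ Q_def by auto
      show "Ladj (Fm k n {x \<in> Q. b x}) \<pi> (fst p) (snd p) = (b p = c p)"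
        using Ladj_Fm[OF inj pQ, of b] unfolding Q_def c_def by simp
    qed
    thus ?thesis unfolding Z_def using card_filter_sum[OF finXY] by simp
  qed
  have "measure (measure_pmf (pmf_of_set (tournaments k n)))
           {T. real (card {p \<in> X \<times> Y. Ladj T \<pi> (fst p) (snd p)}) \<le> real (card X) * real (card Y) / 2 - \<epsilon> * real n ^ 2}
        = measure (measure_pmf M) {b. (\<Sum>p\<in>X \<times> Y. Z p b) \<le> real NN / 2 - \<epsilon> * real n ^ 2}"
    unfolding tour_pmf measure_map_pmf M_def[symmetric] Q_def[symmetric] vimage_def NN_def
    using cnt by simp
  also have "\<dots> \<le> exp (- 2 * \<epsilon> ^ 2 * real n ^ 2)"
  proof (cases "NN = 0")
    case True
    have "{b. (\<Sum>p\<in>X \<times> Y. Z p b) \<le> real NN / 2 - \<epsilon> * real n ^ 2} = {}"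
    proof -
      have s0: "(\<Sum>p\<in>X \<times> Y. Z p b) \<ge> 0" for b by (rule sum_nonneg) (simp add: Z_def)
      have e0: "\<epsilon> * real n ^ 2 > 0" using \<epsilon> n by simp
      show ?thesis
      proof (intro equalityI subsetI)
        fix b assume "b \<in> {b. (\<Sum>p\<in>X \<times> Y. Z p b) \<le> real NN / 2 - \<epsilon> * real n ^ 2}"
        hence "(\<Sum>p\<in>X \<times> Y. Z p b) \<le> - (\<epsilon> * real n ^ 2)" using True by simp
        with s0[of b] e0 show "b \<in> {}" by linarith
      qed simp
    qed
    thus ?thesis by simp
  next
    case False
    hence NNpos: "real NN > 0" by simp
    have cardXY: "card (X \<times> Y) = NN" unfolding NN_def by (simp add: card_cartesian_product)
    interpret H: Hoeffding_ineq "measure_pmf M" "X \<times> Y" Z "\<lambda>_. 0" "\<lambda>_. 1" "real NN / 2"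
    proof unfold_locales
      show "finite (X \<times> Y)" by (rule finXY)
    next
      have "prob_space.indep_vars (measure_pmf M) (\<lambda>_. count_space UNIV) (\<lambda>x f. f x) Q"
        unfolding M_def by (rule indep_vars_Pi_pmf[OF finQ])
      hence "prob_space.indep_vars (measure_pmf M) (\<lambda>_. count_space UNIV) (\<lambda>x f. f x) (X \<times> Y)"
        using XYQ by (rule prob_space.indep_vars_subset[OF measure_pmf.prob_space_axioms])
      hence "prob_space.indep_vars (measure_pmf M) (\<lambda>_. borel) (\<lambda>p f. (\<lambda>v. if v = c p then 1 else (0::real)) (f p)) (X \<times> Y)"
        by (rule prob_space.indep_vars_compose2[OF measure_pmf.prob_space_axioms]) simp
      thus "prob_space.indep_vars (measure_pmf M) (\<lambda>_. borel) Z (X \<times> Y)"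
        unfolding Z_def by simp
    next
      fix p assume "p \<in> X \<times> Y"
      show "AE x in measure_pmf M. Z p x \<in> {0..1}" by (simp add: Z_def)
    next
      have e: "measure_pmf.expectation M (Z p) = 1 / 2" if "p \<in> X \<times> Y" for p
      proof -
        have pQ: "p \<in> Q" using that XYQ by auto
        have "measure_pmf.expectation M (Z p) = measure_pmf.expectation (map_pmf (\<lambda>f. f p) M) (\<lambda>v. if v = c p then 1 else (0::real))"
          unfolding Z_def by simp
        also have "map_pmf (\<lambda>f. f p) M = bernoulli_pmf (1/2)"
          unfolding M_def using Pi_pmf_component[OF finQ, of p False] pQ by simp
        finally show ?thesis by simp
      qed
      have "(\<Sum>p\<in>X \<times> Y. measure_pmf.expectation M (Z p)) = (\<Sum>p\<in>X \<times> Y. 1 / 2)"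
        by (rule sum.cong[OF refl]) (rule e)
      also have "\<dots> = real NN / 2" using cardXY by simp
      finally have "real NN / 2 = (\<Sum>p\<in>X \<times> Y. measure_pmf.expectation M (Z p))" by simp
      thus "real NN / 2 \<equiv> (\<Sum>p\<in>X \<times> Y. measure_pmf.expectation M (Z p))" by (rule eq_reflection)
    qed
    have H1: "measure (measure_pmf M) {x \<in> space (measure_pmf M). (\<Sum>p\<in>X \<times> Y. Z p x) \<le> real NN / 2 - \<epsilon> * real n ^ 2}
          \<le> exp (- 2 * (\<epsilon> * real n ^ 2)\<^sup>2 / (\<Sum>p\<in>X \<times> Y. (1 - 0)\<^sup>2))"
      by (rule H.Hoeffding_ineq_le) (use \<epsilon> cardXY NNpos in auto)
    have H2: "(\<Sum>p\<in>X \<times> Y. (1 - 0 :: real)\<^sup>2) = real NN" using cardXY by simp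
    have H3: "measure (measure_pmf M) {b. (\<Sum>p\<in>X \<times> Y. Z p b) \<le> real NN / 2 - \<epsilon> * real n ^ 2}
          \<le> exp (- 2 * (\<epsilon> * real n ^ 2)\<^sup>2 / real NN)"
      using H1 unfolding H2 by simp
    have H4: "- 2 * (\<epsilon> * real n ^ 2)\<^sup>2 / real NN \<le> - 2 * \<epsilon> ^ 2 * real n ^ 2"
    proof -
      have NNle: "real NN \<le> real n ^ 2"
      proof -
        have "NN \<le> n * n" unfolding NN_def using cardX cardY by (intro mult_le_mono) auto
        thus ?thesis by (simp add: power2_eq_square) (metis of_nat_le_iff of_nat_mult)
      qed
      have "2 * \<epsilon> ^ 2 * real n ^ 2 * real NN \<le> 2 * \<epsilon> ^ 2 * real n ^ 2 * real n ^ 2"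
        using NNle by (intro mult_left_mono) auto
      hence "2 * \<epsilon> ^ 2 * real n ^ 2 \<le> 2 * (\<epsilon> * real n ^ 2)\<^sup>2 / real NN"
        using NNpos by (simp add: pos_le_divide_eq power_mult_distrib power2_eq_square mult_ac)
      thus ?thesis by simp
    qed
    show ?thesis using H3 H4 by (meson exp_le_cancel_iff order_trans)
  qed
  finally show ?thesis .
qed



lemma asym:
  fixes k e :: real
  assumes "k \<ge> 2" "e > 0"
  shows "eventually (\<lambda>n. k * real n * ln (k * real n) + 2 * ln k + k * real n * ln 4 + ln (k * real n) \<le> 2 * e^2 * real n ^ 2) sequentially"
  using assms by real_asymp

lemma pow_exp: "x > 0 \<Longrightarrow> (x::real) ^ m = exp (real m * ln x)"
  by (simp add: exp_ln ln_realpow[symmetric])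

lemma final_arith:
  fixes k :: nat and e :: real and n :: nat
  assumes k: "k \<ge> 2" and n: "n \<ge> 1"
    and L: "real k * real n * ln (real k * real n) + 2 * ln (real k) + real k * real n * ln 4 + ln (real k * real n) \<le> 2 * e^2 * real n ^ 2"
  shows "real ((k * n) ^ (k * n)) * (real (k * k) * (2 ^ (k * n) * 2 ^ (k * n))) * exp (- 2 * e ^ 2 * real n ^ 2) \<le> 1 / (real k * real n)"
proof -
  have kn: "real k * real n > 0" using k n by simp
  have kp: "real k > 0" using k by simp
  have a: "real ((k * n) ^ (k * n)) = exp (real k * real n * ln (real k * real n))"
    using pow_exp[OF kn, of "k * n"] by (simp add: mult_ac)
  have b: "real (k * k) = exp (2 * ln (real k))"
    using pow_exp[OF kp, of 2] by (simp add: power2_eq_square mult_ac)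
  have c: "(2::real) ^ (k * n) * 2 ^ (k * n) = exp (real k * real n * ln 4)"
  proof -
    have "(2::real) ^ (k * n) * 2 ^ (k * n) = 4 ^ (k * n)" by (simp add: power_mult_distrib[symmetric])
    also have "\<dots> = exp (real (k * n) * ln 4)" by (rule pow_exp) simp
    finally show ?thesis by simp
  qed
  have d: "1 / (real k * real n) = exp (- ln (real k * real n))"
    using kn by (simp add: exp_minus exp_ln field_simps)
  show ?thesis unfolding a b c d
    using L by (simp add: exp_add[symmetric])
qed


definition Pif :: "nat \<Rightarrow> nat \<Rightarrow> (nat \<times> nat \<Rightarrow> nat) set" where
  "Pif k n = {f. (\<forall>x. (x \<in> verts k n \<longrightarrow> f x \<in> {1..k * n}) \<and> (x \<notin> verts k n \<longrightarrow> f x = 0)) \<and> inj_on f (verts k n)}"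

definition Idx :: "nat \<Rightarrow> nat \<Rightarrow> (nat \<times> nat \<times> (nat \<times> nat) set \<times> (nat \<times> nat) set) set" where
  "Idx k n = {1..k} \<times> {1..k} \<times> Pow (verts k n) \<times> Pow (verts k n)"

definition Ev :: "nat \<Rightarrow> nat \<Rightarrow> real \<Rightarrow> (nat \<times> nat \<Rightarrow> nat) \<Rightarrow> nat \<times> nat \<times> (nat \<times> nat) set \<times> (nat \<times> nat) set \<Rightarrow> (nat \<times> nat) rel set" where
  "Ev k n \<epsilon> \<pi> q = (case q of (i, j, X, Y) \<Rightarrow> {T. 1 \<le> i \<and> i < j \<and> j \<le> k \<and> X \<subseteq> vclass n i \<and> Y \<subseteq> vclass n j \<and>
      real (card {p \<in> X \<times> Y. Ladj T \<pi> (fst p) (snd p)}) \<le> real (card X) * real (card Y) / 2 - \<epsilon> * real n ^ 2})"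

lemma card_Pif: "card (Pif k n) \<le> (k * n) ^ (k * n)"
proof -
  have sub: "Pif k n \<subseteq> PiE_dflt (verts k n) 0 (\<lambda>_. {1..k * n})"
    unfolding Pif_def PiE_dflt_def by auto
  have fin: "finite (PiE_dflt (verts k n) 0 (\<lambda>_. {1..k * n}))" by (intro finite_PiE_dflt) auto
  have "card (PiE_dflt (verts k n) 0 (\<lambda>_. {1..k * n})) = (k * n) ^ (k * n)"
    by (subst card_PiE_dflt) (auto simp: card_verts)
  thus ?thesis using card_mono[OF fin sub] by simp
qed

lemma finite_Pif: "finite (Pif k n)"
proof -
  have sub: "Pif k n \<subseteq> PiE_dflt (verts k n) 0 (\<lambda>_. {1..k * n})"
    unfolding Pif_def PiE_dflt_def by auto
  have fin: "finite (PiE_dflt (verts k n) 0 (\<lambda>_. {1..k * n}))" by (intro finite_PiE_dflt) auto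
  show ?thesis using finite_subset[OF sub fin] .
qed

lemma card_Idx: "card (Idx k n) = k * k * (2 ^ (k * n) * 2 ^ (k * n))"
  unfolding Idx_def by (simp add: card_cartesian_product card_Pow card_verts)

lemma finite_Idx: "finite (Idx k n)"
  unfolding Idx_def by simp

lemma Ev_bound:
  assumes "\<pi> \<in> Pif k n" "\<epsilon> > 0" "n > 0"
  shows "measure (measure_pmf (pmf_of_set (tournaments k n))) (Ev k n \<epsilon> \<pi> q) \<le> exp (- 2 * \<epsilon> ^ 2 * real n ^ 2)"
proof -
  obtain i j X Y where q: "q = (i, j, X, Y)" by (cases q) auto
  show ?thesis
  proof (cases "1 \<le> i \<and> i < j \<and> j \<le> k \<and> X \<subseteq> vclass n i \<and> Y \<subseteq> vclass n j")
    case True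
    have inj: "inj_on \<pi> (verts k n)" using assms(1) unfolding Pif_def by auto
    have e: "Ev k n \<epsilon> \<pi> q = {T. real (card {p \<in> X \<times> Y. Ladj T \<pi> (fst p) (snd p)}) \<le> real (card X) * real (card Y) / 2 - \<epsilon> * real n ^ 2}"
      unfolding Ev_def q using True by auto
    show ?thesis unfolding e using True assms(2,3)
      by (intro event_bound[OF inj, where i=i and j=j and X=X and Y=Y]) auto
  next
    case False
    hence "Ev k n \<epsilon> \<pi> q = {}" unfolding Ev_def q by auto
    thus ?thesis by simp
  qed
qed

lemma vclass_sub_verts: "i \<in> {1..k} \<Longrightarrow> vclass n i \<subseteq> verts k n"
  unfolding verts_def by auto

lemma bad_sub:
  assumes k: "k \<ge> 2" and r1: "1 \<le> r" and rk: "r < k" and n: "n > 0"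
    and \<delta>_def: "\<delta> = 1 / (8 * real r ^ 2)" and \<alpha>_def: "\<alpha> = 1/2 - \<delta>"
    and \<epsilon>_def: "\<epsilon> = \<delta> / (8 * real r * 324 * real k * 4 ^ r)"
  shows "bad_event k n r \<subseteq> (\<Union>z\<in>Pif k n \<times> Idx k n. Ev k n \<epsilon> (fst z) (snd z))"
proof
  fix T assume "T \<in> bad_event k n r"
  then obtain \<pi> S where bij: "bij_betw \<pi> (verts k n) {1..k * n}"
    and S: "\<forall>i\<in>{1..r}. S i \<subseteq> vclass n i \<and> real (card (S i)) \<ge> real n / 18"
    and Y: "Y_event k n T \<pi> r S"
    unfolding bad_event_def by auto
  have "\<not> Disc k n T \<pi> \<epsilon>"
  proof
    assume D: "Disc k n T \<pi> \<epsilon>"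
    have "\<not> Y_event k n T \<pi> r S"
      by (rule not_Y[OF r1 rk n _ D \<delta>_def \<alpha>_def \<epsilon>_def]) (use S in auto)
    with Y show False by simp
  qed
  then obtain i j X Y where ij: "1 \<le> i" "i < j" "j \<le> k" and X: "X \<subseteq> vclass n i" and Yc: "Y \<subseteq> vclass n j"
    and c: "real (card {p \<in> X \<times> Y. Ladj T \<pi> (fst p) (snd p)}) \<le> real (card X) * real (card Y) / 2 - \<epsilon> * real n ^ 2"
    unfolding Disc_def by (auto simp: not_less)
  define \<pi>0 where "\<pi>0 = (\<lambda>x. if x \<in> verts k n then \<pi> x else 0)"
  have \<pi>0: "\<pi>0 \<in> Pif k n"
    unfolding Pif_def \<pi>0_def using bij bij_betw_imp_inj_on[OF bij] bij_betwE[OF bij]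
    by (auto simp: inj_on_def)
  have Xv: "X \<subseteq> verts k n" using X vclass_sub_verts[of i k n] ij by auto
  have Yv: "Y \<subseteq> verts k n" using Yc vclass_sub_verts[of j k n] ij by auto
  have "{p \<in> X \<times> Y. Ladj T \<pi>0 (fst p) (snd p)} = {p \<in> X \<times> Y. Ladj T \<pi> (fst p) (snd p)}"
    using Xv Yv unfolding \<pi>0_def Ladj_def by auto
  hence "T \<in> Ev k n \<epsilon> \<pi>0 (i, j, X, Y)" unfolding Ev_def using ij X Yc c by simp
  moreover have "(i, j, X, Y) \<in> Idx k n" unfolding Idx_def using ij Xv Yv by auto
  ultimately show "T \<in> (\<Union>z\<in>Pif k n \<times> Idx k n. Ev k n \<epsilon> (fst z) (snd z))"
    using \<pi>0 by force
qed

theorem lemma4p7: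
  fixes k r :: nat
  assumes "k \<ge> 2" and "1 \<le> r" and "r \<le> k - 1"
  shows "\<exists>N. \<forall>n\<ge>N. measure (measure_pmf (pmf_of_set (tournaments k n))) (bad_event k n r)
                         \<le> 1 / (real k * real n)"
proof -
  have k: "k \<ge> 2" and r1: "1 \<le> r" and rk: "r < k" using assms by auto
  define \<delta> :: real where "\<delta> = 1 / (8 * real r ^ 2)"
  define \<alpha> :: real where "\<alpha> = 1/2 - \<delta>"
  define \<epsilon> :: real where "\<epsilon> = \<delta> / (8 * real r * 324 * real k * 4 ^ r)"
  have \<epsilon>pos: "\<epsilon> > 0" unfolding \<epsilon>_def \<delta>_def using r1 rk by simp
  have ev: "eventually (\<lambda>n. real k * real n * ln (real k * real n) + 2 * ln (real k) + real k * real n * ln 4 + ln (real k * real n) \<le> 2 * \<epsilon>^2 * real n ^ 2) sequentially"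
    by (rule asym) (use k \<epsilon>pos in auto)
  then obtain N0 where N0: "\<And>n. n \<ge> N0 \<Longrightarrow> real k * real n * ln (real k * real n) + 2 * ln (real k) + real k * real n * ln 4 + ln (real k * real n) \<le> 2 * \<epsilon>^2 * real n ^ 2"
    unfolding eventually_sequentially by blast
  show ?thesis
  proof (intro exI allI impI)
    fix n assume nN: "n \<ge> max N0 1"
    hence n: "n > 0" "n \<ge> 1" by auto
    let ?M = "measure_pmf (pmf_of_set (tournaments k n))"
    let ?E = "\<lambda>z. Ev k n \<epsilon> (fst z) (snd z)"
    have "measure ?M (bad_event k n r) \<le> measure ?M (\<Union>z\<in>Pif k n \<times> Idx k n. ?E z)"
      by (rule measure_pmf.finite_measure_mono[OF bad_sub[OF k r1 rk n(1) \<delta>_def \<alpha>_def \<epsilon>_def]]) simp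
    also have "\<dots> \<le> (\<Sum>z\<in>Pif k n \<times> Idx k n. measure ?M (?E z))"
      by (rule measure_pmf.finite_measure_subadditive_finite) (auto simp: finite_Pif finite_Idx)
    also have "\<dots> \<le> real (card (Pif k n \<times> Idx k n)) * exp (- 2 * \<epsilon> ^ 2 * real n ^ 2)"
      by (rule sum_bounded_above) (use Ev_bound \<epsilon>pos n in auto)
    also have "\<dots> \<le> real ((k * n) ^ (k * n)) * (real (k * k) * (2 ^ (k * n) * 2 ^ (k * n))) * exp (- 2 * \<epsilon> ^ 2 * real n ^ 2)"
    proof (rule mult_right_mono)
      have "card (Pif k n \<times> Idx k n) \<le> (k * n) ^ (k * n) * (k * k * (2 ^ (k * n) * 2 ^ (k * n)))"
        unfolding card_cartesian_product card_Idx using card_Pif by simp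
      thus "real (card (Pif k n \<times> Idx k n)) \<le> real ((k * n) ^ (k * n)) * (real (k * k) * (2 ^ (k * n) * 2 ^ (k * n)))"
        by (metis (mono_tags, lifting) of_nat_le_iff of_nat_mult of_nat_numeral of_nat_power)
    qed simp
    also have "\<dots> \<le> 1 / (real k * real n)"
      by (rule final_arith[OF k n(2)]) (rule N0, use nN in simp)
    finally show "measure ?M (bad_event k n r) \<le> 1 / (real k * real n)" .
  qed
qed

end
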